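(* Let $n\ge 1$ and $0\le k\le n$, and let $L_n$ denote the number of Latin squares of order $n$. The number of preference profiles for $n$ men and $n$ women in which the men's preferences form a Latin square and there are exactly $k$ pairs of soulmates is \[L_n \binom{n}{k} (n-1)^{n-k} (n-1)!^n\] (with the convention $0^0=1$).
   Context: A preference profile for $n$ (labeled) men and $n$ (labeled) women consists of, for each man, a strict ranking of the women (bijection to $\{1,\dots,n\}$, 1 = favorite), and for each woman, a strict ranking of the men. The men's preferences form a Latin square if the $n\times n$ matrix whose $i$-th row lists the women in man $i$'s order of preference (the entry in column $r$ being the woman he ranks $r$-th) is a Latin square, i.e. for each rank $r$ the women ranked $r$-th by the different men are all distinct. Women's preferences are unrestricted. A man and a woman are soulmates if each ranks the other first. *)

theory Defs
  imports "HOL-Library.FuncSet"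
begin

definition latin_squares :: "nat \<Rightarrow> (nat \<Rightarrow> nat \<Rightarrow> nat) set" where
  "latin_squares n = {M. M \<in> {0..<n} \<rightarrow>\<^sub>E ({0..<n} \<rightarrow>\<^sub>E {0..<n}) \<and>
      (\<forall>i<n. bij_betw (M i) {0..<n} {0..<n}) \<and>
      (\<forall>c<n. bij_betw (\<lambda>i. M i c) {0..<n} {0..<n})}"

definition num_latin_squares :: "nat \<Rightarrow> nat" where
  "num_latin_squares n = card (latin_squares n)"

text \<open>A ranking of n people: a bijection from ranks {1..n} (1 = favourite) to the
people {0..<n}, extensional outside {1..n}.\<close>
definition rankings :: "nat \<Rightarrow> (nat \<Rightarrow> nat) set" where
  "rankings n = {f. f \<in> {1..n} \<rightarrow>\<^sub>E {0..<n} \<and> bij_betw f {1..n} {0..<n}}"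

text \<open>Preference profiles: men and women are labelled 0..n-1; mp i r is the woman
ranked r-th by man i, wp j r the man ranked r-th by woman j.\<close>
definition profiles :: "nat \<Rightarrow> ((nat \<Rightarrow> nat \<Rightarrow> nat) \<times> (nat \<Rightarrow> nat \<Rightarrow> nat)) set" where
  "profiles n = {(mp, wp). mp \<in> {0..<n} \<rightarrow>\<^sub>E rankings n \<and> wp \<in> {0..<n} \<rightarrow>\<^sub>E rankings n}"

definition men_latin :: "nat \<Rightarrow> (nat \<Rightarrow> nat \<Rightarrow> nat) \<Rightarrow> bool" where
  "men_latin n mp \<longleftrightarrow> (\<forall>r\<in>{1..n}. inj_on (\<lambda>i. mp i r) {0..<n})"

definition soulmate_pairs :: "nat \<Rightarrow> (nat \<Rightarrow> nat \<Rightarrow> nat) \<Rightarrow> (nat \<Rightarrow> nat \<Rightarrow> nat) \<Rightarrow> (nat \<times> nat) set" where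
  "soulmate_pairs n mp wp = {(i, j). i < n \<and> j < n \<and> mp i 1 = j \<and> wp j 1 = i}"

end

theory Submission
  imports Defs "HOL-Combinatorics.Multiset_Permutations"
begin


lemma count_lemma:
  assumes fI: "finite I" and fR: "finite R"
    and ca: "\<And>j. j \<in> I \<Longrightarrow> card {r\<in>R. P j r} = a"
    and cb: "\<And>j. j \<in> I \<Longrightarrow> card {r\<in>R. \<not> P j r} = b"
  shows "card {w \<in> PiE I (\<lambda>_. R). card {j\<in>I. P j (w j)} = k}
         = (card I choose k) * a ^ k * b ^ (card I - k)"
proof -
  define Q where "Q J = PiE I (\<lambda>j. if j \<in> J then {r\<in>R. P j r} else {r\<in>R. \<not> P j r})" for J
  define SS where "SS = {J. J \<subseteq> I \<and> card J = k}"
  have eq: "{w \<in> PiE I (\<lambda>_. R). card {j\<in>I. P j (w j)} = k} = (\<Union>J\<in>SS. Q J)"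
  proof (intro equalityI subsetI)
    fix w assume w: "w \<in> {w \<in> PiE I (\<lambda>_. R). card {j\<in>I. P j (w j)} = k}"
    then have "w \<in> Q {j\<in>I. P j (w j)}" unfolding Q_def by (auto simp: PiE_iff)
    moreover have "{j\<in>I. P j (w j)} \<in> SS" using w unfolding SS_def by auto
    ultimately show "w \<in> (\<Union>J\<in>SS. Q J)" by blast
  next
    fix w assume "w \<in> (\<Union>J\<in>SS. Q J)"
    then obtain J where J: "J \<in> SS" "w \<in> Q J" by blast
    have "{j\<in>I. P j (w j)} = J" using J unfolding Q_def SS_def by (auto simp: PiE_iff split: if_splits)
    then show "w \<in> {w \<in> PiE I (\<lambda>_. R). card {j\<in>I. P j (w j)} = k}"
      using J unfolding Q_def SS_def by (auto simp: PiE_iff split: if_splits)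
  qed
  have fSS: "finite SS" unfolding SS_def using fI by simp
  have disj: "\<forall>J\<in>SS. \<forall>J'\<in>SS. J \<noteq> J' \<longrightarrow> Q J \<inter> Q J' = {}"
  proof (intro ballI impI)
    fix J J' assume J: "J \<in> SS" "J' \<in> SS" "J \<noteq> J'"
    show "Q J \<inter> Q J' = {}"
    proof (rule ccontr)
      assume "Q J \<inter> Q J' \<noteq> {}"
      then obtain w where w: "w \<in> Q J" "w \<in> Q J'" by blast
      have "{j\<in>I. P j (w j)} = J" using w J unfolding Q_def SS_def by (auto simp: PiE_iff split: if_splits)
      moreover have "{j\<in>I. P j (w j)} = J'" using w J unfolding Q_def SS_def by (auto simp: PiE_iff split: if_splits)
      ultimately show False using J by simp
    qed
  qed
  have cQ: "card (Q J) = a ^ k * b ^ (card I - k)" if "J \<in> SS" for J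
  proof -
    have JI: "J \<subseteq> I" "card J = k" using that SS_def by auto
    have "card (Q J) = (\<Prod>j\<in>I. card (if j \<in> J then {r\<in>R. P j r} else {r\<in>R. \<not> P j r}))"
      unfolding Q_def using fI by (simp add: card_PiE)
    also have "\<dots> = (\<Prod>j\<in>I. if j \<in> J then a else b)"
      by (rule prod.cong) (auto simp: ca cb)
    also have "\<dots> = (\<Prod>j\<in>I \<inter> {j. j \<in> J}. a) * (\<Prod>j\<in>I \<inter> - {j. j \<in> J}. b)"
      by (rule prod.If_cases[OF fI])
    also have "I \<inter> {j. j \<in> J} = J" using JI by auto
    also have "I \<inter> - {j. j \<in> J} = I - J" by auto
    also have "(\<Prod>j\<in>J. a) = a ^ card J" by simp
    also have "(\<Prod>j\<in>I - J. b) = b ^ card (I - J)" by simp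
    also have "card (I - J) = card I - k" using JI fI by (simp add: card_Diff_subset finite_subset)
    finally show ?thesis using JI by simp
  qed
  have "card (\<Union>J\<in>SS. Q J) = (\<Sum>J\<in>SS. card (Q J))"
  proof (rule card_UN_disjoint[OF fSS])
    show "\<forall>J\<in>SS. finite (Q J)" unfolding Q_def using fI fR by (intro ballI finite_PiE) auto
    show "\<forall>J\<in>SS. \<forall>J'\<in>SS. J \<noteq> J' \<longrightarrow> Q J \<inter> Q J' = {}" by (rule disj)
  qed
  also have "\<dots> = (\<Sum>J\<in>SS. a ^ k * b ^ (card I - k))" by (rule sum.cong) (auto simp: cQ)
  also have "\<dots> = card SS * (a ^ k * b ^ (card I - k))" by simp
  also have "card SS = card I choose k" unfolding SS_def by (rule n_subsets[OF fI])
  finally show ?thesis using eq by (simp add: mult.assoc)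
qed



definition rk2l :: "nat \<Rightarrow> (nat \<Rightarrow> nat) \<Rightarrow> nat list" where
  "rk2l n f = map f [1..<Suc n]"
definition l2rk :: "nat \<Rightarrow> nat list \<Rightarrow> (nat \<Rightarrow> nat)" where
  "l2rk n xs = (\<lambda>r. if r \<in> {1..n} then xs ! (r - 1) else undefined)"

lemma bij_rk: "bij_betw (rk2l n) (rankings n) (permutations_of_set {0..<n})"
proof (rule bij_betw_byWitness[where f' = "l2rk n"])
  show "\<forall>f\<in>rankings n. l2rk n (rk2l n f) = f"
  proof
    fix f assume f: "f \<in> rankings n"
    show "l2rk n (rk2l n f) = f"
    proof
      fix r show "l2rk n (rk2l n f) r = f r"
      proof (cases "r \<in> {1..n}")
        case True
        then have "r - 1 < length [1..<Suc n]" by auto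
        then have "map f [1..<Suc n] ! (r - 1) = f ([1..<Suc n] ! (r - 1))" by (rule nth_map)
        also have "[1..<Suc n] ! (r - 1) = r" using True by (subst nth_upt) auto
        finally show ?thesis using True unfolding l2rk_def rk2l_def by simp
      next
        case False
        have "f \<in> extensional {1..n}" using f unfolding rankings_def by (auto simp: PiE_def)
        then have "f r = undefined" using False by (simp add: extensional_def)
        then show ?thesis using False unfolding l2rk_def by auto
      qed
    qed
  qed
  show "\<forall>xs\<in>permutations_of_set {0..<n}. rk2l n (l2rk n xs) = xs"
  proof
    fix xs assume xs: "xs \<in> permutations_of_set {0..<n}"
    have len: "length xs = n" using length_finite_permutations_of_set[OF xs] by simp
    show "rk2l n (l2rk n xs) = xs"
      by (rule nth_equalityI) (auto simp: rk2l_def l2rk_def len nth_upt simp del: upt_Suc)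
  qed
  show "rk2l n ` rankings n \<subseteq> permutations_of_set {0..<n}"
  proof
    fix ys assume "ys \<in> rk2l n ` rankings n"
    then obtain f where f: "f \<in> rankings n" "ys = rk2l n f" by blast
    have b: "bij_betw f {1..n} {0..<n}" using f by (simp add: rankings_def)
    have s: "set [1..<Suc n] = {1..n}" by auto
    show "ys \<in> permutations_of_set {0..<n}"
      unfolding f rk2l_def
    proof (rule permutations_of_setI)
      show "set (map f [1..<Suc n]) = {0..<n}" using b s by (simp add: bij_betw_def)
      show "distinct (map f [1..<Suc n])" using b s by (simp add: bij_betw_def distinct_map)
    qed
  qed
  show "l2rk n ` permutations_of_set {0..<n} \<subseteq> rankings n"
  proof
    fix g assume "g \<in> l2rk n ` permutations_of_set {0..<n}"
    then obtain xs where xs: "xs \<in> permutations_of_set {0..<n}" "g = l2rk n xs" by blast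
    have len: "length xs = n" using length_finite_permutations_of_set[OF xs(1)] by simp
    have d: "distinct xs" "set xs = {0..<n}" using permutations_of_setD[OF xs(1)] by auto
    have b1: "bij_betw ((!) xs) {..<n} {0..<n}" using bij_betw_nth[OF d(1)] len d(2) by auto
    have b2: "bij_betw (\<lambda>r. r - 1) {1..n} {..<n}"
      by (rule bij_betw_byWitness[where f' = Suc]) auto
    have "bij_betw ((!) xs \<circ> (\<lambda>r. r - 1)) {1..n} {0..<n}"
      using bij_betw_comp_iff[OF b2] b1 by blast
    moreover have "bij_betw g {1..n} {0..<n} = bij_betw ((!) xs \<circ> (\<lambda>r. r - 1)) {1..n} {0..<n}"
      by (rule bij_betw_cong) (simp add: xs(2) l2rk_def)
    ultimately have "bij_betw g {1..n} {0..<n}" by simp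
    moreover have "g \<in> {1..n} \<rightarrow>\<^sub>E {0..<n}"
    proof -
      have "g r \<in> {0..<n}" if r: "r \<in> {1..n}" for r
      proof -
        have "r - 1 < length xs" using r len by auto
        then have "xs ! (r - 1) \<in> set xs" by (rule nth_mem)
        then show ?thesis using r d(2) by (simp add: xs(2) l2rk_def)
      qed
      moreover have "g \<in> extensional {1..n}" by (simp add: xs(2) l2rk_def extensional_def)
      ultimately show ?thesis by (simp add: PiE_iff)
    qed
    ultimately show "g \<in> rankings n" by (simp add: rankings_def)
  qed
qed

lemma card_rankings: "card (rankings n) = fact n"
  using bij_betw_same_card[OF bij_rk] by simp

lemma finite_rankings: "finite (rankings n)"
  using bij_betw_finite[OF bij_rk] by simp

lemma bij_betw_filter:
  assumes "bij_betw f A B" "\<And>a. a \<in> A \<Longrightarrow> P a \<longleftrightarrow> Q (f a)"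
  shows "bij_betw f {a\<in>A. P a} {b\<in>B. Q b}"
  using assms unfolding bij_betw_def inj_on_def by (auto simp: image_iff) 

lemma card_rankings_first:
  assumes n: "n \<ge> 1" and m: "m < n"
  shows "card {f\<in>rankings n. f 1 = m} = fact (n - 1)"
proof -
  have "bij_betw (rk2l n) {f\<in>rankings n. f 1 = m} {xs\<in>permutations_of_set {0..<n}. xs ! 0 = m}"
    by (rule bij_betw_filter[OF bij_rk]) (use n in \<open>auto simp: rk2l_def nth_map simp del: upt_Suc\<close>)
  then have "card {f\<in>rankings n. f 1 = m} = card {xs\<in>permutations_of_set {0..<n}. xs ! 0 = m}"
    by (rule bij_betw_same_card)
  also have "{xs\<in>permutations_of_set {0..<n}. xs ! 0 = m} = (#) m ` permutations_of_set ({0..<n} - {m})"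
  proof (intro equalityI subsetI)
    fix xs assume xs: "xs \<in> {xs\<in>permutations_of_set {0..<n}. xs ! 0 = m}"
    have len: "length xs = n" using length_finite_permutations_of_set[of xs "{0..<n}"] xs by simp
    then obtain y ys where yy: "xs = y # ys" using n by (cases xs) auto
    have "y = m" using xs yy by simp
    moreover have "ys \<in> permutations_of_set ({0..<n} - {m})"
    proof -
      have p: "set (m # ys) = {0..<n}" "distinct (m # ys)"
        using permutations_of_setD[of xs "{0..<n}"] xs yy \<open>y = m\<close> by auto
      then have "m \<notin> set ys" "distinct ys" by auto
      moreover have "insert m (set ys) = {0..<n}" using p(1) by simp
      ultimately have "set ys = {0..<n} - {m}" by blast
      then show ?thesis using \<open>distinct ys\<close> by (rule permutations_of_setI)
    qed
    ultimately show "xs \<in> (#) m ` permutations_of_set ({0..<n} - {m})" using yy by blast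
  next
    fix xs assume "xs \<in> (#) m ` permutations_of_set ({0..<n} - {m})"
    then obtain ys where ys: "ys \<in> permutations_of_set ({0..<n} - {m})" "xs = m # ys" by blast
    note p = permutations_of_setD[OF ys(1)]
    have "m \<in> {0..<n}" using m by simp
    then have "insert m ({0..<n} - {m}) = {0..<n}" by (rule insert_Diff)
    then have "set xs = {0..<n}" using p(1) ys(2) by simp
    moreover have "distinct xs" using p ys(2) by simp
    ultimately have "xs \<in> permutations_of_set {0..<n}" by (rule permutations_of_setI)
    then show "xs \<in> {xs\<in>permutations_of_set {0..<n}. xs ! 0 = m}" using ys(2) by simp
  qed
  also have "card \<dots> = card (permutations_of_set ({0..<n} - {m}))"
    by (rule card_image) (simp add: inj_on_def)
  also have "\<dots> = fact (n - 1)" using m by simp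
  finally show ?thesis .
qed

lemma card_rankings_notfirst:
  assumes n: "n \<ge> 1" and m: "m < n"
  shows "card {f\<in>rankings n. f 1 \<noteq> m} = (n - 1) * fact (n - 1)"
proof -
  have "card {f\<in>rankings n. f 1 \<noteq> m} = card (rankings n - {f\<in>rankings n. f 1 = m})"
    by (rule arg_cong[where f=card]) auto
  also have "\<dots> = fact n - fact (n - 1)"
    using card_rankings_first[OF n m] by (subst card_Diff_subset) (auto simp: finite_rankings card_rankings)
  also have "\<dots> = (n - 1) * fact (n - 1)"
  proof -
    obtain p where "n = Suc p" using n by (cases n) auto
    then show ?thesis by (simp add: algebra_simps)
  qed
  finally show ?thesis .
qed



lemma shiftA: "bij_betw f {1..n} Y \<Longrightarrow> bij_betw (\<lambda>c. f (Suc c)) {0..<n} Y"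
proof -
  assume f: "bij_betw f {1..n} Y"
  have s: "bij_betw Suc {0..<n} {1..n}"
    by (rule bij_betw_byWitness[where f' = "\<lambda>r. r - 1"]) auto
  have "bij_betw (f \<circ> Suc) {0..<n} Y" using bij_betw_comp_iff[OF s] f by blast
  then show ?thesis by (simp add: o_def)
qed

lemma shiftB: "bij_betw g {0..<n::nat} Y \<Longrightarrow> bij_betw (\<lambda>r. g (r - 1)) {1..n} Y"
proof -
  assume g: "bij_betw g {0..<n} Y"
  have s: "bij_betw (\<lambda>r. r - 1) {1..n} {0..<n}"
    by (rule bij_betw_byWitness[where f' = Suc]) auto
  have "bij_betw (g \<circ> (\<lambda>r. r - 1)) {1..n} Y" using bij_betw_comp_iff[OF s] g by blast
  then show ?thesis by (simp add: o_def)
qed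

lemma inj_to_bij:
  assumes "inj_on f {0..<n::nat}" "\<And>i. i < n \<Longrightarrow> f i < n"
  shows "bij_betw f {0..<n} {0..<n}"
proof -
  have "f ` {0..<n} \<subseteq> {0..<n}" using assms(2) by auto
  then have "f ` {0..<n} = {0..<n}" using endo_inj_surj[OF _ _ assms(1)] by simp
  then show ?thesis using assms(1) by (simp add: bij_betw_def)
qed

lemma rankings_range: "f \<in> rankings n \<Longrightarrow> r \<in> {1..n} \<Longrightarrow> f r < n"
  unfolding rankings_def by (auto simp: PiE_iff)

lemma rankings_ext: "f \<in> rankings n \<Longrightarrow> r \<notin> {1..n} \<Longrightarrow> f r = undefined"
  unfolding rankings_def by (auto simp: PiE_iff extensional_def)

lemma rankings_bij: "f \<in> rankings n \<Longrightarrow> bij_betw f {1..n} {0..<n}"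
  unfolding rankings_def by simp

definition menA :: "nat \<Rightarrow> (nat \<Rightarrow> nat \<Rightarrow> nat) set" where
  "menA n = {mp \<in> {0..<n} \<rightarrow>\<^sub>E rankings n. men_latin n mp}"

definition Phi :: "nat \<Rightarrow> (nat \<Rightarrow> nat \<Rightarrow> nat) \<Rightarrow> (nat \<Rightarrow> nat \<Rightarrow> nat)" where
  "Phi n mp = (\<lambda>i\<in>{0..<n}. \<lambda>c\<in>{0..<n}. mp i (Suc c))"
definition Psi :: "nat \<Rightarrow> (nat \<Rightarrow> nat \<Rightarrow> nat) \<Rightarrow> (nat \<Rightarrow> nat \<Rightarrow> nat)" where
  "Psi n M = (\<lambda>i\<in>{0..<n}. \<lambda>r\<in>{1..n}. M i (r - 1))"

lemma card_menA: "card (menA n) = num_latin_squares n"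
  unfolding num_latin_squares_def
proof (rule bij_betw_same_card[of "Phi n"], rule bij_betw_byWitness[where f' = "Psi n"])
  show "\<forall>mp\<in>menA n. Psi n (Phi n mp) = mp"
  proof
    fix mp assume mp: "mp \<in> menA n"
    show "Psi n (Phi n mp) = mp"
    proof
      fix i show "Psi n (Phi n mp) i = mp i"
      proof (cases "i < n")
        case True
        then have ri: "mp i \<in> rankings n" using mp unfolding menA_def by auto
        show ?thesis
        proof
          fix r show "Psi n (Phi n mp) i r = mp i r"
          proof (cases "r \<in> {1..n}")
            case True
            then have "Suc (r - 1) = r" "r - 1 < n" by auto
            then show ?thesis using True \<open>i < n\<close> by (simp add: Psi_def Phi_def)
          next
            case False
            then show ?thesis using rankings_ext[OF ri False] \<open>i < n\<close> by (auto simp: Psi_def)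
          qed
        qed
      next
        case False
        have "mp \<in> extensional {0..<n}" using mp unfolding menA_def by (simp add: PiE_def)
        then have "mp i = undefined" using False by (simp add: extensional_def)
        then show ?thesis using False by (simp add: Psi_def)
      qed
    qed
  qed
  show "\<forall>M\<in>latin_squares n. Phi n (Psi n M) = M"
  proof
    fix M assume M: "M \<in> latin_squares n"
    then have MP: "M \<in> {0..<n} \<rightarrow>\<^sub>E ({0..<n} \<rightarrow>\<^sub>E {0..<n})" unfolding latin_squares_def by simp
    show "Phi n (Psi n M) = M"
    proof
      fix i show "Phi n (Psi n M) i = M i"
      proof (cases "i < n")
        case True
        then have Mi: "M i \<in> extensional {0..<n}" using MP by (simp add: PiE_def Pi_def)
        show ?thesis
        proof
          fix c show "Phi n (Psi n M) i c = M i c"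
          proof (cases "c < n")
            case True
            then show ?thesis using \<open>i < n\<close> by (simp add: Psi_def Phi_def)
          next
            case False
            then show ?thesis using Mi \<open>i < n\<close> by (simp add: Phi_def extensional_def)
          qed
        qed
      next
        case False
        have "M \<in> extensional {0..<n}" using MP by (simp add: PiE_def)
        then have "M i = undefined" using False by (simp add: extensional_def)
        then show ?thesis using False by (simp add: Phi_def)
      qed
    qed
  qed
  show "Phi n ` menA n \<subseteq> latin_squares n"
  proof
    fix M assume "M \<in> Phi n ` menA n"
    then obtain mp where mp: "mp \<in> menA n" "M = Phi n mp" by blast
    have ri: "\<And>i. i < n \<Longrightarrow> mp i \<in> rankings n" using mp(1) unfolding menA_def by auto
    have ml: "\<And>r. r \<in> {1..n} \<Longrightarrow> inj_on (\<lambda>i. mp i r) {0..<n}"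
      using mp(1) unfolding menA_def men_latin_def by auto
    have P1: "M \<in> {0..<n} \<rightarrow>\<^sub>E ({0..<n} \<rightarrow>\<^sub>E {0..<n})"
      using ri rankings_range by (auto simp: mp(2) Phi_def)
    have P2: "bij_betw (M i) {0..<n} {0..<n}" if i: "i < n" for i
    proof -
      have "bij_betw (\<lambda>c. mp i (Suc c)) {0..<n} {0..<n}" by (rule shiftA[OF rankings_bij[OF ri[OF i]]])
      moreover have "bij_betw (M i) {0..<n} {0..<n} = bij_betw (\<lambda>c. mp i (Suc c)) {0..<n} {0..<n}"
        by (rule bij_betw_cong) (simp add: mp(2) Phi_def i)
      ultimately show ?thesis by simp
    qed
    have P3: "bij_betw (\<lambda>i. M i c) {0..<n} {0..<n}" if c: "c < n" for c
    proof -
      have "bij_betw (\<lambda>i. mp i (Suc c)) {0..<n} {0..<n}"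
        by (rule inj_to_bij) (use ml[of "Suc c"] c ri rankings_range in auto)
      moreover have "bij_betw (\<lambda>i. M i c) {0..<n} {0..<n} = bij_betw (\<lambda>i. mp i (Suc c)) {0..<n} {0..<n}"
        by (rule bij_betw_cong) (simp add: mp(2) Phi_def c)
      ultimately show ?thesis by simp
    qed
    show "M \<in> latin_squares n" unfolding latin_squares_def using P1 P2 P3 by blast
  qed
  show "Psi n ` latin_squares n \<subseteq> menA n"
  proof
    fix mp assume "mp \<in> Psi n ` latin_squares n"
    then obtain M where M: "M \<in> latin_squares n" "mp = Psi n M" by blast
    have MP: "M \<in> {0..<n} \<rightarrow>\<^sub>E ({0..<n} \<rightarrow>\<^sub>E {0..<n})"
      and rows: "\<And>i. i < n \<Longrightarrow> bij_betw (M i) {0..<n} {0..<n}"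
      and cols: "\<And>c. c < n \<Longrightarrow> bij_betw (\<lambda>i. M i c) {0..<n} {0..<n}"
      using M(1) unfolding latin_squares_def by auto
    have R: "mp i \<in> rankings n" if i: "i < n" for i
    proof -
      have "bij_betw (\<lambda>r. M i (r - 1)) {1..n} {0..<n}" by (rule shiftB[OF rows[OF i]])
      moreover have "bij_betw (mp i) {1..n} {0..<n} = bij_betw (\<lambda>r. M i (r - 1)) {1..n} {0..<n}"
        by (rule bij_betw_cong) (simp add: M(2) Psi_def i)
      ultimately have b: "bij_betw (mp i) {1..n} {0..<n}" by simp
      have "mp i \<in> {1..n} \<rightarrow>\<^sub>E {0..<n}"
      proof -
        have "mp i r \<in> {0..<n}" if r: "r \<in> {1..n}" for r
          using b r by (auto simp: bij_betw_def)
        moreover have "mp i \<in> extensional {1..n}" using i by (simp add: M(2) Psi_def)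
        ultimately show ?thesis by (simp add: PiE_iff)
      qed
      then show ?thesis using b by (simp add: rankings_def)
    qed
    have "mp \<in> {0..<n} \<rightarrow>\<^sub>E rankings n"
    proof -
      have "mp \<in> extensional {0..<n}" by (simp add: M(2) Psi_def)
      then show ?thesis using R by (simp add: PiE_iff)
    qed
    moreover have "men_latin n mp"
      unfolding men_latin_def
    proof
      fix r assume r: "r \<in> {1..n}"
      have "r - 1 < n" using r by auto
      then have "inj_on (\<lambda>i. M i (r - 1)) {0..<n}" using cols bij_betw_def by blast
      moreover have "inj_on (\<lambda>i. mp i r) {0..<n} = inj_on (\<lambda>i. M i (r - 1)) {0..<n}"
        using r by (intro inj_on_cong) (auto simp: M(2) Psi_def)
      ultimately show "inj_on (\<lambda>i. mp i r) {0..<n}" by simp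
    qed
    ultimately show "mp \<in> menA n" unfolding menA_def by simp
  qed
qed



lemma soul_card:
  assumes mp: "mp \<in> menA n" and wp: "wp \<in> {0..<n} \<rightarrow>\<^sub>E rankings n"
  defines "\<tau> \<equiv> inv_into {0..<n} (\<lambda>i. mp i 1)"
  shows "card (soulmate_pairs n mp wp) = card {j\<in>{0..<n}. wp j 1 = \<tau> j}"
proof -
  have ri: "\<And>i. i < n \<Longrightarrow> mp i \<in> rankings n" using mp unfolding menA_def by auto
  have inj: "inj_on (\<lambda>i. mp i 1) {0..<n}" if "n \<ge> 1"
    using mp that unfolding menA_def men_latin_def by auto
  have eq: "soulmate_pairs n mp wp = (\<lambda>j. (\<tau> j, j)) ` {j\<in>{0..<n}. wp j 1 = \<tau> j}"
  proof (intro equalityI subsetI)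
    fix p assume "p \<in> soulmate_pairs n mp wp"
    then obtain i j where p: "p = (i, j)" "i < n" "j < n" "mp i 1 = j" "wp j 1 = i"
      unfolding soulmate_pairs_def by auto
    have "n \<ge> 1" using p by auto
    have "\<tau> j = i" unfolding \<tau>_def using inv_into_f_f[OF inj[OF \<open>n \<ge> 1\<close>], of i] p by simp
    then show "p \<in> (\<lambda>j. (\<tau> j, j)) ` {j\<in>{0..<n}. wp j 1 = \<tau> j}" using p by auto
  next
    fix p assume "p \<in> (\<lambda>j. (\<tau> j, j)) ` {j\<in>{0..<n}. wp j 1 = \<tau> j}"
    then obtain j where p: "p = (\<tau> j, j)" "j < n" "wp j 1 = \<tau> j" by auto
    have n1: "n \<ge> 1" using p by auto
    have b: "bij_betw (\<lambda>i. mp i 1) {0..<n} {0..<n}"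
      by (rule inj_to_bij[OF inj[OF n1]]) (use ri rankings_range n1 in auto)
    have "j \<in> (\<lambda>i. mp i 1) ` {0..<n}" using b p by (simp add: bij_betw_def)
    then have "\<tau> j \<in> {0..<n}" "mp (\<tau> j) 1 = j" unfolding \<tau>_def
      by (rule inv_into_into, rule f_inv_into_f)
    then show "p \<in> soulmate_pairs n mp wp" using p unfolding soulmate_pairs_def by auto
  qed
  show ?thesis unfolding eq by (rule card_image) (simp add: inj_on_def)
qed

lemma tau_range:
  assumes mp: "mp \<in> menA n" and j: "j < n"
  shows "inv_into {0..<n} (\<lambda>i. mp i 1) j < n"
proof -
  have ri: "\<And>i. i < n \<Longrightarrow> mp i \<in> rankings n" using mp unfolding menA_def by auto
  have n1: "n \<ge> 1" using j by auto
  have inj: "inj_on (\<lambda>i. mp i 1) {0..<n}"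
    using mp n1 unfolding menA_def men_latin_def by auto
  have b: "bij_betw (\<lambda>i. mp i 1) {0..<n} {0..<n}"
    by (rule inj_to_bij[OF inj]) (use ri rankings_range n1 in auto)
  have "j \<in> (\<lambda>i. mp i 1) ` {0..<n}" using b j by (simp add: bij_betw_def)
  then have "inv_into {0..<n} (\<lambda>i. mp i 1) j \<in> {0..<n}" by (rule inv_into_into)
  then show ?thesis by simp
qed

lemma card_B:
  assumes mp: "mp \<in> menA n" and n: "n \<ge> 1" and k: "k \<le> n"
  shows "card {wp \<in> {0..<n} \<rightarrow>\<^sub>E rankings n. card (soulmate_pairs n mp wp) = k}
       = (n choose k) * (n - 1) ^ (n - k) * (fact (n - 1)) ^ n"
proof -
  define \<tau> where "\<tau> = inv_into {0..<n} (\<lambda>i. mp i 1)"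
  have "{wp \<in> {0..<n} \<rightarrow>\<^sub>E rankings n. card (soulmate_pairs n mp wp) = k}
      = {wp \<in> {0..<n} \<rightarrow>\<^sub>E rankings n. card {j\<in>{0..<n}. wp j 1 = \<tau> j} = k}"
  proof (rule Collect_cong)
    fix wp
    show "(wp \<in> {0..<n} \<rightarrow>\<^sub>E rankings n \<and> card (soulmate_pairs n mp wp) = k) =
          (wp \<in> {0..<n} \<rightarrow>\<^sub>E rankings n \<and> card {j\<in>{0..<n}. wp j 1 = \<tau> j} = k)"
      using soul_card[OF mp, of wp] unfolding \<tau>_def by (cases "wp \<in> {0..<n} \<rightarrow>\<^sub>E rankings n") simp_all
  qed
  also have "card \<dots> = (card {0..<n} choose k) * fact (n - 1) ^ k * ((n - 1) * fact (n - 1)) ^ (card {0..<n} - k)"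
  proof (rule count_lemma)
    show "card {r \<in> rankings n. r 1 = \<tau> j} = fact (n - 1)" if "j \<in> {0..<n}" for j
      using card_rankings_first[OF n, of "\<tau> j"] tau_range[OF mp, of j] that unfolding \<tau>_def by simp
    show "card {r \<in> rankings n. r 1 \<noteq> \<tau> j} = (n - 1) * fact (n - 1)" if "j \<in> {0..<n}" for j
      using card_rankings_notfirst[OF n, of "\<tau> j"] tau_range[OF mp, of j] that unfolding \<tau>_def by simp
  qed (auto simp: finite_rankings)
  also have "\<dots> = (n choose k) * (n - 1) ^ (n - k) * (fact (n - 1) ^ k * fact (n - 1) ^ (n - k))"
    by (simp add: power_mult_distrib)
  also have "fact (n - 1) ^ k * fact (n - 1) ^ (n - k) = (fact (n - 1) :: nat) ^ n"
    using k by (simp flip: power_add)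
  finally show ?thesis by simp
qed



theorem mainTheorem4:
  fixes n k :: nat
  assumes "n \<ge> 1" and "k \<le> n"
  shows "card {(mp, wp) \<in> profiles n. men_latin n mp \<and> card (soulmate_pairs n mp wp) = k}
       = num_latin_squares n * (n choose k) * (n - 1) ^ (n - k) * (fact (n - 1)) ^ n"
proof -
  define B where "B mp = {wp \<in> {0..<n} \<rightarrow>\<^sub>E rankings n. card (soulmate_pairs n mp wp) = k}" for mp
  have eq: "{(mp, wp) \<in> profiles n. men_latin n mp \<and> card (soulmate_pairs n mp wp) = k}
          = Sigma (menA n) B"
  proof (intro equalityI subsetI)
    fix p assume "p \<in> {(mp, wp) \<in> profiles n. men_latin n mp \<and> card (soulmate_pairs n mp wp) = k}"
    then obtain mp wp where "p = (mp, wp)" "mp \<in> {0..<n} \<rightarrow>\<^sub>E rankings n" "wp \<in> {0..<n} \<rightarrow>\<^sub>E rankings n"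
      "men_latin n mp" "card (soulmate_pairs n mp wp) = k"
      unfolding profiles_def by blast
    then show "p \<in> Sigma (menA n) B" unfolding menA_def B_def by blast
  next
    fix p assume "p \<in> Sigma (menA n) B"
    then obtain mp wp where "p = (mp, wp)" "mp \<in> {0..<n} \<rightarrow>\<^sub>E rankings n" "wp \<in> {0..<n} \<rightarrow>\<^sub>E rankings n"
      "men_latin n mp" "card (soulmate_pairs n mp wp) = k"
      unfolding menA_def B_def by blast
    then show "p \<in> {(mp, wp) \<in> profiles n. men_latin n mp \<and> card (soulmate_pairs n mp wp) = k}"
      unfolding profiles_def by blast
  qed
  have fA: "finite (menA n)"
    by (rule finite_subset[of _ "{0..<n} \<rightarrow>\<^sub>E rankings n"]) (auto simp: menA_def finite_rankings intro!: finite_PiE)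
  have fB: "\<forall>mp\<in>menA n. finite (B mp)"
  proof
    fix mp show "finite (B mp)"
      by (rule finite_subset[of _ "{0..<n} \<rightarrow>\<^sub>E rankings n"]) (auto simp: B_def finite_rankings intro!: finite_PiE)
  qed
  have "card (Sigma (menA n) B) = (\<Sum>mp\<in>menA n. card (B mp))"
    by (rule card_SigmaI[OF fA fB])
  also have "\<dots> = (\<Sum>mp\<in>menA n. (n choose k) * (n - 1) ^ (n - k) * (fact (n - 1)) ^ n)"
    using card_B[OF _ assms] unfolding B_def by (intro sum.cong) auto
  also have "\<dots> = num_latin_squares n * (n choose k) * (n - 1) ^ (n - k) * (fact (n - 1)) ^ n"
    by (simp add: card_menA mult.assoc)
  finally show ?thesis using eq by simp
qed

end
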